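(* Let $E$ be a real Banach space, $K\subset E$ nonempty closed convex, $Y$ a real Banach space containing a closed, convex, pointed cone $C$ with nonempty interior, $g\in\mathcal F$ satisfying H1–H4, $T:K\to\mathcal P(K)$ satisfying B4, and $f:E\times E\to Y$ satisfying B1–B3. Let $v\in K$, $x\in T(v)$, $\beta>0$ and $e\in\mathrm{int}(C)$. If $$z\in\mathrm{argmin}^C_w\{\beta f(x,y)+g(y)e-\langle y,g'(x)\rangle e: y\in T(v)\},$$ then there exists $c\in C^+\setminus\{0\}$ such that $$\langle y-z,g'(x)-g'(z)\rangle\langle e,c\rangle\le\beta\big[\langle f(x,y),c\rangle-\langle f(x,z),c\rangle\big]\quad\text{for all }y\in T(v).$$
   Context: $C^+=\{z\in Y^*:\langle y,z\rangle\ge0\ \forall y\in C\}$; $y\preceq y'$ iff $y'-y\in C$; $G$ is $C$-convex if $G(tx+(1-t)y)\preceq tG(x)+(1-t)G(y)$ for all $x,y$, $t\in[0,1]$. $\mathcal F$: functions $g:E\to\mathbb R$ strictly convex, lower semicontinuous, Gâteaux differentiable with derivative $g'$. $D_g(x,y)=g(x)-g(y)-\langle x-y,g'(y)\rangle$; $v_g(x,t)=\inf\{D_g(y,x):\|y-x\|=t\}$. H1: level sets of $D_g(x,\cdot)$ bounded; H2: $\inf_{x\in A}v_g(x,t)>0$ for all $t>0$, bounded $A$; H3: $g'$ uniformly continuous on bounded sets; H4: $\lim_{\|x\|\to\infty}(g(x)-\rho\|x-z\|)=\infty$ for all $z$, $\rho>0$. $\Pi^g_D(x)$: unique minimizer of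 $D_g(\cdot,x)$ over nonempty closed convex $D$. B1: $f(x,x)=0$. B2: $f$ uniformly continuous on bounded subsets of $E\times E$. B3: $f(x,\cdot)$ $C$-convex for all $x$. B4: $T$ has nonempty closed convex values, is demiclosed ($x^k\rightharpoonup\bar x$, $d(x^k,T(x^k))\to0\Rightarrow\bar x\in T(\bar x)$), lower semicontinuous at each $\bar x\in K$ ($x^k\to\bar x$, $\bar y\in T(\bar x)\Rightarrow\exists y^k\in T(x^k)$, $y^k\to\bar y$), and quasi $D_g$-nonexpansive ($S(x)=\Pi^g_{T(x)}(x)$ has a fixed point and $D_g(p,S(x))\le D_g(p,x)$ for all fixed points $p$ of $S$ and $x\in K$). $\mathrm{argmin}^C_w\{G(y):y\in Q\}$: set of $a\in Q$ for which no $y\in Q$ satisfies $G(a)-G(y)\in\mathrm{int}(C)$. *)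

theory Defs
  imports "HOL-Analysis.Analysis"
begin

definition strictly_convex :: "('a::real_vector \<Rightarrow> real) \<Rightarrow> bool" where
  "strictly_convex g \<longleftrightarrow>
     (\<forall>x y t. x \<noteq> y \<and> 0 < t \<and> t < 1 \<longrightarrow>
        g (t *\<^sub>R x + (1 - t) *\<^sub>R y) < t * g x + (1 - t) * g y)"

definition lsc :: "('a::topological_space \<Rightarrow> real) \<Rightarrow> bool" where
  "lsc g \<longleftrightarrow> (\<forall>x. \<forall>\<epsilon>>0. \<forall>\<^sub>F y in at x. g x - \<epsilon> < g y)"

text \<open>Gateaux differentiability of g with Gateaux derivative gd x, a continuous linear
  functional (element of the dual space); the pairing is blinfun_apply.\<close>
definition gateaux_deriv :: "('a::real_normed_vector \<Rightarrow> real) \<Rightarrow> ('a \<Rightarrow> ('a \<Rightarrow>\<^sub>L real)) \<Rightarrow> bool" where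
  "gateaux_deriv g gd \<longleftrightarrow>
     (\<forall>x h. ((\<lambda>t. g (x + t *\<^sub>R h)) has_real_derivative (blinfun_apply (gd x) h)) (at 0))"

definition class_F :: "('a::real_normed_vector \<Rightarrow> real) \<Rightarrow> ('a \<Rightarrow> ('a \<Rightarrow>\<^sub>L real)) \<Rightarrow> bool" where
  "class_F g gd \<longleftrightarrow> strictly_convex g \<and> lsc g \<and> gateaux_deriv g gd"

definition bregman :: "('a::real_normed_vector \<Rightarrow> real) \<Rightarrow> ('a \<Rightarrow> ('a \<Rightarrow>\<^sub>L real)) \<Rightarrow> 'a \<Rightarrow> 'a \<Rightarrow> real" where
  "bregman g gd x y = g x - g y - blinfun_apply (gd y) (x - y)"

definition mod_tc :: "('a::real_normed_vector \<Rightarrow> real) \<Rightarrow> ('a \<Rightarrow> ('a \<Rightarrow>\<^sub>L real)) \<Rightarrow> 'a \<Rightarrow> real \<Rightarrow> real" where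
  "mod_tc g gd x t = Inf {bregman g gd y x | y. norm (y - x) = t}"

definition H1 :: "('a::real_normed_vector \<Rightarrow> real) \<Rightarrow> ('a \<Rightarrow> ('a \<Rightarrow>\<^sub>L real)) \<Rightarrow> bool" where
  "H1 g gd \<longleftrightarrow> (\<forall>x r. bounded {y. bregman g gd x y \<le> r})"

definition H2 :: "('a::real_normed_vector \<Rightarrow> real) \<Rightarrow> ('a \<Rightarrow> ('a \<Rightarrow>\<^sub>L real)) \<Rightarrow> bool" where
  "H2 g gd \<longleftrightarrow> (\<forall>A t. bounded A \<and> t > 0 \<longrightarrow> (\<exists>\<delta>>0. \<forall>x\<in>A. \<delta> \<le> mod_tc g gd x t))"

definition H3 :: "('a::real_normed_vector \<Rightarrow> ('a \<Rightarrow>\<^sub>L real)) \<Rightarrow> bool" where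
  "H3 gd \<longleftrightarrow> (\<forall>A. bounded A \<longrightarrow> uniformly_continuous_on A gd)"

definition H4 :: "('a::real_normed_vector \<Rightarrow> real) \<Rightarrow> bool" where
  "H4 g \<longleftrightarrow> (\<forall>z. \<forall>\<rho>>0. filterlim (\<lambda>x. g x - \<rho> * norm (x - z)) at_top at_infinity)"

definition bproj :: "('a::real_normed_vector \<Rightarrow> real) \<Rightarrow> ('a \<Rightarrow> ('a \<Rightarrow>\<^sub>L real)) \<Rightarrow> 'a set \<Rightarrow> 'a \<Rightarrow> 'a" where
  "bproj g gd D x = (THE y. y \<in> D \<and> (\<forall>w\<in>D. bregman g gd y x \<le> bregman g gd w x))"

definition dual_cone :: "('b::real_normed_vector) set \<Rightarrow> ('b \<Rightarrow>\<^sub>L real) set" where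
  "dual_cone C = {z. \<forall>y\<in>C. 0 \<le> blinfun_apply z y}"

definition C_convex :: "'b::real_vector set \<Rightarrow> ('a::real_vector \<Rightarrow> 'b) \<Rightarrow> bool" where
  "C_convex C G \<longleftrightarrow> (\<forall>x y t. 0 \<le> t \<and> t \<le> 1 \<longrightarrow>
      t *\<^sub>R G x + (1 - t) *\<^sub>R G y - G (t *\<^sub>R x + (1 - t) *\<^sub>R y) \<in> C)"

definition weak_argmin :: "'b::real_normed_vector set \<Rightarrow> ('a \<Rightarrow> 'b) \<Rightarrow> 'a set \<Rightarrow> 'a set" where
  "weak_argmin C G Q = {a \<in> Q. \<not> (\<exists>y\<in>Q. G a - G y \<in> interior C)}"

definition weak_conv :: "(nat \<Rightarrow> 'a::real_normed_vector) \<Rightarrow> 'a \<Rightarrow> bool" where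
  "weak_conv xs x \<longleftrightarrow> (\<forall>\<phi>::'a \<Rightarrow>\<^sub>L real. (\<lambda>k. blinfun_apply \<phi> (xs k)) \<longlonglongrightarrow> blinfun_apply \<phi> x)"

definition B1 :: "('a \<Rightarrow> 'a \<Rightarrow> 'b::zero) \<Rightarrow> bool" where
  "B1 f \<longleftrightarrow> (\<forall>x. f x x = 0)"

definition B2 :: "('a::real_normed_vector \<Rightarrow> 'a \<Rightarrow> 'b::real_normed_vector) \<Rightarrow> bool" where
  "B2 f \<longleftrightarrow> (\<forall>B::('a \<times> 'a) set. bounded B \<longrightarrow> uniformly_continuous_on B (\<lambda>(x, y). f x y))"

definition B3 :: "'b::real_vector set \<Rightarrow> ('a::real_vector \<Rightarrow> 'a \<Rightarrow> 'b) \<Rightarrow> bool" where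
  "B3 C f \<longleftrightarrow> (\<forall>x. C_convex C (f x))"

definition B4 :: "('a::real_normed_vector \<Rightarrow> real) \<Rightarrow> ('a \<Rightarrow> ('a \<Rightarrow>\<^sub>L real)) \<Rightarrow> 'a set
                  \<Rightarrow> ('a \<Rightarrow> 'a set) \<Rightarrow> bool" where
  "B4 g gd K T \<longleftrightarrow>
     (\<forall>x\<in>K. T x \<subseteq> K \<and> T x \<noteq> {} \<and> closed (T x) \<and> convex (T x)) \<and>
     (\<forall>xs xb. (\<forall>k. xs k \<in> K) \<and> weak_conv xs xb \<and>
              (\<lambda>k. infdist (xs k) (T (xs k))) \<longlonglongrightarrow> 0 \<longrightarrow> xb \<in> T xb) \<and>
     (\<forall>xs xb yb. xb \<in> K \<and> (\<forall>k. xs k \<in> K) \<and> xs \<longlonglongrightarrow> xb \<and> yb \<in> T xb \<longrightarrow>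
              (\<exists>ys. (\<forall>k. ys k \<in> T (xs k)) \<and> ys \<longlonglongrightarrow> yb)) \<and>
     (\<exists>p\<in>K. bproj g gd (T p) p = p) \<and>
     (\<forall>p\<in>K. bproj g gd (T p) p = p \<longrightarrow>
        (\<forall>x\<in>K. bregman g gd p (bproj g gd (T x) x) \<le> bregman g gd p x))"

end

theory Submission imports Defs begin


definition sublin :: "('b::real_vector \<Rightarrow> real) \<Rightarrow> bool" where
 "sublin p \<longleftrightarrow> (\<forall>x y. p (x + y) \<le> p x + p y) \<and> (\<forall>x r. r > 0 \<longrightarrow> p (r *\<^sub>R x) = r * p x)"

definition goodg :: "('b::real_vector \<Rightarrow> real) \<Rightarrow> ('b \<times> real) set \<Rightarrow> bool" where
 "goodg p G \<longleftrightarrow> (\<forall>x a b. (x,a) \<in> G \<longrightarrow> (x,b) \<in> G \<longrightarrow> a = b) \<and> (0,0) \<in> G \<and>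
   (\<forall>x a y b. (x,a) \<in> G \<longrightarrow> (y,b) \<in> G \<longrightarrow> (x+y,a+b) \<in> G) \<and>
   (\<forall>x a r. (x,a) \<in> G \<longrightarrow> (r *\<^sub>R x, r*a) \<in> G) \<and> (\<forall>x a. (x,a) \<in> G \<longrightarrow> a \<le> p x)"

lemma good_extend:
  assumes sp: "sublin p" and gM: "goodg p M" and y0: "\<forall>a. (y0,a) \<notin> M"
  shows "\<exists>M'. goodg p M' \<and> M \<subseteq> M' \<and> M' \<noteq> M"
proof -
  have add: "\<And>x a y b. (x,a) \<in> M \<Longrightarrow> (y,b) \<in> M \<Longrightarrow> (x+y,a+b) \<in> M" and
       sc: "\<And>x a r. (x,a) \<in> M \<Longrightarrow> (r *\<^sub>R x, r*a) \<in> M" and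
       dom: "\<And>x a. (x,a) \<in> M \<Longrightarrow> a \<le> p x" and
       fn: "\<And>x a b. (x,a) \<in> M \<Longrightarrow> (x,b) \<in> M \<Longrightarrow> a = b" and
       z0: "(0,0) \<in> M" using gM unfolding goodg_def by blast+
  have padd: "\<And>x y. p (x+y) \<le> p x + p y" and phom: "\<And>x r. r > 0 \<Longrightarrow> p (r *\<^sub>R x) = r * p x"
    using sp unfolding sublin_def by blast+
  have key: "a - p (x - y0) \<le> p (x' + y0) - a'" if "(x,a) \<in> M" "(x',a') \<in> M" for x a x' a'
  proof -
    have "a + a' \<le> p (x + x')" using dom[OF add[OF that]] .
    moreover have "x + x' = (x - y0) + (x' + y0)" by simp
    hence "p (x + x') \<le> p (x - y0) + p (x' + y0)" using padd by metis
    ultimately show ?thesis by simp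
  qed
  define Lo where "Lo = {a - p (x - y0) | x a. (x,a) \<in> M}"
  define t where "t = Sup Lo"
  have Lo_ne: "Lo \<noteq> {}" using z0 unfolding Lo_def by blast
  have bdd: "bdd_above Lo" unfolding Lo_def bdd_above_def using key[OF _ z0] by fastforce
  have t_lo: "a - p (x - y0) \<le> t" if "(x,a) \<in> M" for x a
    unfolding t_def by (rule cSup_upper[OF _ bdd]) (use that Lo_def in blast)
  have t_up: "t \<le> p (x' + y0) - a'" if "(x',a') \<in> M" for x' a'
    unfolding t_def by (rule cSup_least[OF Lo_ne]) (use that key Lo_def in blast)
  define M' where "M' = {(x + s *\<^sub>R y0, a + s * t) | x a s. (x,a) \<in> M}"
  have dom': "a + s * t \<le> p (x + s *\<^sub>R y0)" if xa: "(x,a) \<in> M" for x a s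
  proof -
    consider "s > 0" | "s < 0" | "s = 0" by linarith
    then show ?thesis
    proof cases
      case 1
      have m: "(inverse s *\<^sub>R x, inverse s * a) \<in> M" using sc[OF xa] .
      have "t \<le> p (inverse s *\<^sub>R x + y0) - inverse s * a" using t_up[OF m] .
      hence "s * t \<le> s * (p (inverse s *\<^sub>R x + y0) - inverse s * a)" using 1
        by (simp add: mult_left_mono)
      also have "\<dots> = s * p (inverse s *\<^sub>R x + y0) - a" using 1 by (simp add: right_diff_distrib)
      finally have "s * t \<le> s * p (inverse s *\<^sub>R x + y0) - a" .
      moreover have "s *\<^sub>R (inverse s *\<^sub>R x + y0) = x + s *\<^sub>R y0" using 1
        by (simp add: scaleR_add_right)
      ultimately show ?thesis using phom[OF 1, of "inverse s *\<^sub>R x + y0"] by simp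
    next
      case 2
      define r where "r = - s"
      have r: "r > 0" using 2 r_def by simp
      have m: "(inverse r *\<^sub>R x, inverse r * a) \<in> M" using sc[OF xa] .
      have "inverse r * a - p (inverse r *\<^sub>R x - y0) \<le> t" using t_lo[OF m] .
      hence "r * (inverse r * a - p (inverse r *\<^sub>R x - y0)) \<le> r * t" using r
        by (simp add: mult_left_mono)
      moreover have "r * (inverse r * a - p (inverse r *\<^sub>R x - y0)) = a - r * p (inverse r *\<^sub>R x - y0)"
        using r by (simp add: right_diff_distrib)
      ultimately have "a - r * p (inverse r *\<^sub>R x - y0) \<le> r * t" by simp
      moreover have "r *\<^sub>R (inverse r *\<^sub>R x - y0) = x + s *\<^sub>R y0" using r r_def
        by (simp add: scaleR_diff_right)
      ultimately show ?thesis using phom[OF r, of "inverse r *\<^sub>R x - y0"] r_def by simp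
    next
      case 3 then show ?thesis using dom[OF xa] by simp
    qed
  qed
  have fn': "a + s * t = a' + s' * t" if xa: "(x,a) \<in> M" and xa': "(x',a') \<in> M"
    and eq: "x + s *\<^sub>R y0 = x' + s' *\<^sub>R y0" for x a s x' a' s'
  proof (cases "s = s'")
    case True
    then have "x = x'" using eq by simp
    then show ?thesis using fn xa xa' True by blast
  next
    case False
    have m: "(x' + (-1) *\<^sub>R x, a' + (-1) * a) \<in> M" using add[OF xa' sc[OF xa]] .
    have "(s - s') *\<^sub>R y0 = x' - x" using eq by (simp add: algebra_simps)
    moreover have "y0 = inverse (s - s') *\<^sub>R ((s - s') *\<^sub>R y0)" using False by simp
    ultimately have "y0 = inverse (s - s') *\<^sub>R (x' + (-1) *\<^sub>R x)" by simp
    hence "(y0, inverse (s - s') * (a' + (-1) * a)) \<in> M" using sc[OF m] by simp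
    then show ?thesis using y0 by blast
  qed
  have "goodg p M'"
    unfolding goodg_def
  proof (intro conjI allI impI)
    fix x a b assume "(x,a) \<in> M'" "(x,b) \<in> M'"
    then show "a = b" unfolding M'_def using fn' by blast
  next
    show "(0,0) \<in> M'" unfolding M'_def using z0 by force
  next
    fix x a y b assume "(x,a) \<in> M'" "(y,b) \<in> M'"
    then obtain x1 a1 s1 x2 a2 s2 where "(x1,a1) \<in> M" "(x2,a2) \<in> M"
      "x = x1 + s1 *\<^sub>R y0" "a = a1 + s1 * t" "y = x2 + s2 *\<^sub>R y0" "b = a2 + s2 * t"
      unfolding M'_def by blast
    moreover have "x + y = (x1 + x2) + (s1 + s2) *\<^sub>R y0 \<and> a + b = (a1 + a2) + (s1 + s2) * t"
      using calculation by (simp add: algebra_simps)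
    ultimately show "(x+y, a+b) \<in> M'" unfolding M'_def using add by blast
  next
    fix x a r assume "(x,a) \<in> M'"
    then obtain x1 a1 s1 where "(x1,a1) \<in> M" "x = x1 + s1 *\<^sub>R y0" "a = a1 + s1 * t"
      unfolding M'_def by blast
    moreover have "r *\<^sub>R x = r *\<^sub>R x1 + (r * s1) *\<^sub>R y0 \<and> r * a = r * a1 + (r * s1) * t"
      using calculation by (simp add: algebra_simps)
    ultimately show "(r *\<^sub>R x, r * a) \<in> M'" unfolding M'_def using sc by blast
  next
    fix x a assume "(x,a) \<in> M'"
    then show "a \<le> p x" unfolding M'_def using dom' by blast
  qed
  moreover have "M \<subseteq> M'"
  proof
    fix q assume "q \<in> M"
    then obtain x a where "q = (x,a)" "(x,a) \<in> M" by (cases q) auto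
    then show "q \<in> M'" unfolding M'_def by force
  qed
  moreover have "(y0, t) \<in> M'" unfolding M'_def using z0
    by (smt (verit, del_insts) add_0 mem_Collect_eq mult_cancel_right1 scaleR_one)
  hence "M' \<noteq> M" using y0 by blast
  ultimately show ?thesis by blast
qed

lemma hahn_banach:
  assumes sp: "sublin p" and g0: "goodg p G0"
  shows "\<exists>L. linear L \<and> (\<forall>x. L x \<le> p x) \<and> (\<forall>x a. (x,a) \<in> G0 \<longrightarrow> L x = a)"
proof -
  define A where "A = {G. goodg p G \<and> G0 \<subseteq> G}"
  have "\<exists>M\<in>A. \<forall>X\<in>A. M \<subseteq> X \<longrightarrow> X = M"
  proof (rule Zorn_Lemma2, intro ballI)
    fix C assume C: "C \<in> chains A"
    show "\<exists>U\<in>A. \<forall>X\<in>C. X \<subseteq> U"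
    proof (cases "C = {}")
      case True then show ?thesis using g0 A_def by auto
    next
      case False
      have CA: "C \<subseteq> A" using chainsD2[OF C] .
      have two: "\<exists>X\<in>C. P \<in> X \<and> Q \<in> X" if PQ: "P \<in> \<Union>C" "Q \<in> \<Union>C" for P Q
      proof -
        obtain X1 X2 where "X1 \<in> C" "X2 \<in> C" "P \<in> X1" "Q \<in> X2" using PQ by blast
        then show ?thesis using chainsD[OF C, of X1 X2] by blast
      qed
      have gX: "goodg p X" if "X \<in> C" for X using CA that A_def by blast
      have "goodg p (\<Union>C)" unfolding goodg_def
      proof (intro conjI allI impI)
        fix x a b assume "(x,a) \<in> \<Union>C" "(x,b) \<in> \<Union>C"
        then obtain X where "X \<in> C" "(x,a) \<in> X" "(x,b) \<in> X" using two by blast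
        then show "a = b" using gX unfolding goodg_def by blast
      next
        obtain X where "X \<in> C" using False by blast
        then show "(0,0) \<in> \<Union>C" using gX unfolding goodg_def by blast
      next
        fix x a y b assume "(x,a) \<in> \<Union>C" "(y,b) \<in> \<Union>C"
        then obtain X where "X \<in> C" "(x,a) \<in> X" "(y,b) \<in> X" using two by blast
        then show "(x+y,a+b) \<in> \<Union>C" using gX unfolding goodg_def by blast
      next
        fix x a r assume "(x,a) \<in> \<Union>C"
        then obtain X where "X \<in> C" "(x,a) \<in> X" by blast
        then show "(r *\<^sub>R x, r*a) \<in> \<Union>C" using gX unfolding goodg_def by blast
      next
        fix x a assume "(x,a) \<in> \<Union>C"
        then obtain X where "X \<in> C" "(x,a) \<in> X" by blast
        then show "a \<le> p x" using gX unfolding goodg_def by blast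
      qed
      moreover have "G0 \<subseteq> \<Union>C" using False CA A_def by blast
      ultimately show ?thesis unfolding A_def by blast
    qed
  qed
  then obtain M where MA: "M \<in> A" and Mmax: "\<And>X. X \<in> A \<Longrightarrow> M \<subseteq> X \<Longrightarrow> X = M" by blast
  have gM: "goodg p M" and G0M: "G0 \<subseteq> M" using MA A_def by auto
  have tot: "\<exists>a. (y,a) \<in> M" for y
  proof (rule ccontr)
    assume "\<not> ?thesis"
    then obtain M' where "goodg p M'" "M \<subseteq> M'" "M' \<noteq> M" using good_extend[OF sp gM] by blast
    moreover have "M' \<in> A" using calculation G0M A_def by blast
    ultimately show False using Mmax by blast
  qed
  have add: "\<And>x a y b. (x,a) \<in> M \<Longrightarrow> (y,b) \<in> M \<Longrightarrow> (x+y,a+b) \<in> M" and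
       sc: "\<And>x a r. (x,a) \<in> M \<Longrightarrow> (r *\<^sub>R x, r*a) \<in> M" and
       dom: "\<And>x a. (x,a) \<in> M \<Longrightarrow> a \<le> p x" and
       fn: "\<And>x a b. (x,a) \<in> M \<Longrightarrow> (x,b) \<in> M \<Longrightarrow> a = b"
    using gM unfolding goodg_def by blast+
  define L where "L y = (THE a. (y,a) \<in> M)" for y
  have LM: "(y, L y) \<in> M" for y
    unfolding L_def by (rule theI') (use tot fn in blast)
  have Leq: "L y = a" if "(y,a) \<in> M" for y a using fn[OF that LM] by simp
  have "linear L"
    by (rule linearI) (use Leq add sc LM in auto)
  moreover have "\<forall>x. L x \<le> p x" using dom LM by blast
  moreover have "\<forall>x a. (x,a) \<in> G0 \<longrightarrow> L x = a" using Leq G0M by blast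
  ultimately show ?thesis by blast
qed

definition gaugef :: "'b::real_normed_vector set \<Rightarrow> 'b \<Rightarrow> real" where
  "gaugef W x = Inf {l. 0 < l \<and> inverse l *\<^sub>R x \<in> W}"

lemma gauge_props:
  fixes W :: "'b::real_normed_vector set"
  assumes cW: "convex W" and oW: "open W" and W0: "0 \<in> W"
  shows "sublin (gaugef W)" "\<exists>r>0. \<forall>x. gaugef W x \<le> norm x / r"
        "\<forall>x. 0 \<le> gaugef W x" "\<forall>w\<in>W. gaugef W w < 1" "\<forall>x. x \<notin> W \<longrightarrow> 1 \<le> gaugef W x"
proof -
  define S where "S x = {l. 0 < l \<and> inverse l *\<^sub>R x \<in> W}" for x :: 'b
  have p_def: "gaugef W x = Inf (S x)" for x unfolding gaugef_def S_def by simp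
  obtain r where r: "r > 0" "ball 0 r \<subseteq> W" using oW W0 open_contains_ball by blast
  have big: "l \<in> S x" if "l > norm x / r" for l x
  proof -
    have l0: "l > 0" using that r(1) by (smt (verit) divide_nonneg_pos norm_ge_zero)
    have "norm x < r * l" using that r(1) by (simp add: divide_less_eq mult.commute)
    hence "norm (inverse l *\<^sub>R x) < r" using l0 by (simp add: field_simps)
    hence "inverse l *\<^sub>R x \<in> W" using r(2) by auto
    then show ?thesis using l0 S_def by simp
  qed
  have ne: "S x \<noteq> {}" for x using big[of x "norm x / r + 1"] by auto
  have bdd: "bdd_below (S x)" for x unfolding bdd_below_def S_def
    by (rule exI[of _ 0]) auto
  have low: "gaugef W x \<le> l" if "l \<in> S x" for x l
    unfolding p_def using cInf_lower[OF that bdd] .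
  have glb: "c \<le> gaugef W x" if "\<And>l. l \<in> S x \<Longrightarrow> c \<le> l" for x c
    unfolding p_def using cInf_greatest[OF ne that] by blast
  have mono: "m \<in> S x" if "l \<in> S x" "l \<le> m" for l m x
  proof -
    have l0: "l > 0" "inverse l *\<^sub>R x \<in> W" using that S_def by auto
    have m0: "m > 0" using l0 that by simp
    have "(l/m) *\<^sub>R (inverse l *\<^sub>R x) + (1 - l/m) *\<^sub>R 0 \<in> W"
      by (rule convexD[OF cW l0(2) W0]) (use l0 m0 that in auto)
    moreover have "(l/m) * inverse l = inverse m" using l0 m0 by (simp add: field_simps)
    hence "(l/m) *\<^sub>R (inverse l *\<^sub>R x) + (1 - l/m) *\<^sub>R 0 = inverse m *\<^sub>R x"
      by simp
    ultimately have "inverse m *\<^sub>R x \<in> W" by (simp only:)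
    then show ?thesis using m0 S_def by simp
  qed
  show "\<forall>x. 0 \<le> gaugef W x" using glb S_def by force
  show "\<exists>r>0. \<forall>x. gaugef W x \<le> norm x / r"
  proof (intro exI[of _ r] conjI allI)
    fix x
    show "gaugef W x \<le> norm x / r"
    proof (rule ccontr)
      assume nt: "\<not> gaugef W x \<le> norm x / r"
      hence "norm x / r < (gaugef W x + norm x / r) / 2" by argo
      hence "gaugef W x \<le> (gaugef W x + norm x / r) / 2" using big low by blast
      then show False using nt by simp
    qed
  qed (use r in simp)
  show "\<forall>w\<in>W. gaugef W w < 1"
  proof
    fix w assume w: "w \<in> W"
    obtain d where d: "d > 0" "ball w d \<subseteq> W" using oW w open_contains_ball by blast
    define k where "k = 1 + d / (2 * (norm w + 1))"
    have "0 < d / (2 * (norm w + 1))" using d by (intro divide_pos_pos) (auto intro: add_nonneg_pos)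
    hence k1: "k > 1" using k_def by simp
    have "k *\<^sub>R w - w = (k - 1) *\<^sub>R w" by (simp add: algebra_simps)
    hence "dist (k *\<^sub>R w) w = (k - 1) * norm w" using k1 by (simp add: dist_norm)
    also have "\<dots> = d * norm w / (2 * (norm w + 1))" by (simp add: k_def)
    also have "\<dots> < d"
    proof -
      have pos: "2 * (norm w + 1) > 0" by (smt (verit) norm_ge_zero)
      have "d * norm w < d * (2 * (norm w + 1))" using d norm_ge_zero[of w] by (intro mult_strict_left_mono) (smt (verit))+
      then show ?thesis using pos_divide_less_eq[OF pos] by (simp only:)
    qed
    finally have "k *\<^sub>R w \<in> W" using d by (auto simp: dist_commute)
    hence "inverse k \<in> S w" using k1 S_def by simp
    hence "gaugef W w \<le> inverse k" by (rule low)
    also have "\<dots> < 1" using k1 by (simp add: inverse_less_1_iff)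
    finally show "gaugef W w < 1" .
  qed
  show "\<forall>x. x \<notin> W \<longrightarrow> 1 \<le> gaugef W x"
  proof (intro allI impI)
    fix x assume x: "x \<notin> W"
    show "1 \<le> gaugef W x"
    proof (rule ccontr)
      assume "\<not> ?thesis"
      then obtain l where "l \<in> S x" "l < 1" using cInf_lessD[OF ne] p_def by (metis not_le)
      hence "1 \<in> S x" using mono by simp
      then show False using x S_def by simp
    qed
  qed
  have sub: "gaugef W (x + y) \<le> gaugef W x + gaugef W y" for x y
  proof -
    have lm: "gaugef W (x + y) \<le> l + m" if l: "l \<in> S x" and m: "m \<in> S y" for l m
    proof -
      have l0: "l > 0" "inverse l *\<^sub>R x \<in> W" using l S_def by auto
      have m0: "m > 0" "inverse m *\<^sub>R y \<in> W" using m S_def by auto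
      have "(l/(l+m)) *\<^sub>R (inverse l *\<^sub>R x) + (m/(l+m)) *\<^sub>R (inverse m *\<^sub>R y) \<in> W"
        by (rule convexD[OF cW l0(2) m0(2)]) (use l0 m0 in \<open>auto simp: add_divide_distrib[symmetric]\<close>)
      moreover have "(l/(l+m)) *\<^sub>R (inverse l *\<^sub>R x) + (m/(l+m)) *\<^sub>R (inverse m *\<^sub>R y)
          = inverse (l + m) *\<^sub>R (x + y)"
        using l0 m0 by (simp add: field_simps scaleR_add_right)
      ultimately have "l + m \<in> S (x + y)" using l0 m0 S_def by simp
      then show ?thesis by (rule low)
    qed
    have "gaugef W (x + y) - gaugef W y \<le> l" if l: "l \<in> S x" for l
    proof -
      have "gaugef W (x + y) - l \<le> m" if "m \<in> S y" for m using lm[OF l that] by simp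
      hence "gaugef W (x + y) - l \<le> gaugef W y" using glb by blast
      then show ?thesis by simp
    qed
    hence "gaugef W (x + y) - gaugef W y \<le> gaugef W x" using glb by blast
    then show ?thesis by simp
  qed
  have hom1: "gaugef W (c *\<^sub>R x) \<le> c * gaugef W x" if c: "c > 0" for c x
  proof -
    have "gaugef W (c *\<^sub>R x) / c \<le> l" if l: "l \<in> S x" for l
    proof -
      have l0: "l > 0" "inverse l *\<^sub>R x \<in> W" using l S_def by auto
      have "inverse (c * l) * c = inverse l" using c by (simp add: field_simps)
      hence eq: "inverse (c * l) *\<^sub>R (c *\<^sub>R x) = inverse l *\<^sub>R x" by (simp only: scaleR_scaleR)
      have "0 < c * l" using l0 c by simp
      hence "c * l \<in> S (c *\<^sub>R x)" unfolding S_def mem_Collect_eq eq using l0 by blast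
      hence "gaugef W (c *\<^sub>R x) \<le> c * l" by (rule low)
      then show ?thesis using c by (simp add: divide_le_eq mult.commute)
    qed
    hence "gaugef W (c *\<^sub>R x) / c \<le> gaugef W x" using glb by blast
    then show ?thesis using c by (simp add: divide_le_eq mult.commute)
  qed
  have hom: "gaugef W (c *\<^sub>R x) = c * gaugef W x" if c: "c > 0" for c x
  proof -
    have "gaugef W x = gaugef W (inverse c *\<^sub>R (c *\<^sub>R x))" using c by simp
    also have "\<dots> \<le> inverse c * gaugef W (c *\<^sub>R x)" by (rule hom1) (use c in simp)
    finally have "c * gaugef W x \<le> gaugef W (c *\<^sub>R x)" using c
      by (simp add: field_simps)
    then show ?thesis using hom1[OF c, of x] by linarith
  qed
  show "sublin (gaugef W)" unfolding sublin_def using sub hom by blast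
qed

lemma separation:
  fixes U :: "'b::real_normed_vector set"
  assumes oU: "open U" and cU: "convex U" and neU: "U \<noteq> {}" and U0: "0 \<notin> U"
  shows "\<exists>c::'b \<Rightarrow>\<^sub>L real. \<forall>u\<in>U. 0 < blinfun_apply c u"
proof -
  obtain u0 where u0: "u0 \<in> U" using neU by blast
  define W where "W = (\<lambda>u. u - u0) ` U"
  have oW: "open W" unfolding W_def by (rule open_translation_subtract[OF oU])
  have cW: "convex W" unfolding W_def by (rule convex_translation_subtract[OF cU])
  have W0: "0 \<in> W" using u0 W_def by force
  have w0: "- u0 \<notin> W"
  proof
    assume "- u0 \<in> W"
    then obtain u where "u \<in> U" "- u0 = u - u0" unfolding W_def by blast
    then show False using U0 by simp
  qed
  have u00: "u0 \<noteq> 0" using u0 U0 by auto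
  define p where "p = gaugef W"
  note gp = gauge_props[OF cW oW W0, folded p_def]
  have psub: "sublin p" using gp(1) .
  have phom: "\<And>x r. r > 0 \<Longrightarrow> p (r *\<^sub>R x) = r * p x" using psub unfolding sublin_def by blast
  define G0 where "G0 = {(s *\<^sub>R (- u0), s) | s. True}"
  have "goodg p G0" unfolding goodg_def
  proof (intro conjI allI impI)
    fix x a b assume "(x,a) \<in> G0" "(x,b) \<in> G0"
    then have "a *\<^sub>R (- u0) = b *\<^sub>R (- u0)" unfolding G0_def by auto
    then show "a = b" using u00 by simp
  next
    show "(0,0) \<in> G0" unfolding G0_def by (rule CollectI, rule exI[of _ 0]) simp
  next
    fix x a y b assume "(x,a) \<in> G0" "(y,b) \<in> G0"
    then show "(x+y,a+b) \<in> G0" unfolding G0_def by (auto simp: scaleR_add_left)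
  next
    fix x a r assume "(x,a) \<in> G0"
    then show "(r *\<^sub>R x, r*a) \<in> G0" unfolding G0_def by auto
  next
    fix x a assume "(x,a) \<in> G0"
    then have x: "x = a *\<^sub>R (- u0)" unfolding G0_def by auto
    show "a \<le> p x"
    proof (cases "a > 0")
      case True
      then have "p x = a * p (- u0)" using phom[OF True, of "- u0"] x by simp
      moreover have "1 \<le> p (- u0)" using gp(5) w0 by blast
      ultimately show ?thesis using True by (simp add: mult_le_cancel_left1)
    next
      case False
      then show ?thesis using gp(3) by (smt (verit))
    qed
  qed
  from hahn_banach[OF psub this] obtain L where
    L: "linear L" "\<forall>x. L x \<le> p x" "\<forall>x a. (x,a)\<in>G0 \<longrightarrow> L x = a" by blast
  obtain r where r: "r > 0" "\<forall>x. p x \<le> norm x / r" using gp(2) by blast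
  have Lm: "L (- x) = - L x" for x using L(1) by (simp add: linear_neg)
  have Ld: "L (x - y) = L x - L y" for x y using L(1) by (simp add: linear_diff)
  have bl: "bounded_linear (\<lambda>x. - L x)"
  proof (rule bounded_linear_intro[where K = "1/r"])
    fix x y show "- L (x + y) = - L x + - L y" using L(1) by (simp add: linear_add)
  next
    fix a x show "- L (a *\<^sub>R x) = a *\<^sub>R - L x" using L(1) by (simp add: linear_scale)
  next
    fix x
    have "L x \<le> norm x / r" using L(2) r(2) order_trans by blast
    moreover have "- L x \<le> norm x / r" using L(2) r(2)[rule_format, of "- x"] Lm[of x] by (metis norm_minus_cancel order_trans)
    ultimately show "norm (- L x) \<le> norm x * (1 / r)" by simp
  qed
  define c where "c = Blinfun (\<lambda>x. - L x)"
  have capp: "blinfun_apply c u = - L u" for u using bl c_def by (simp add: bounded_linear_Blinfun_apply)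
  have "(1 *\<^sub>R (- u0), 1) \<in> G0" unfolding G0_def by blast
  hence L1: "L (- u0) = 1" using L(3) by simp
  show ?thesis
  proof (intro exI[of _ c] ballI)
    fix u assume u: "u \<in> U"
    then have "u - u0 \<in> W" unfolding W_def by blast
    hence "p (u - u0) < 1" using gp(4) by blast
    hence "L (u - u0) < 1" using L(2) order_le_less_trans by blast
    moreover have "L (u - u0) = L u + 1" using Ld L1 Lm by (metis diff_minus_eq_add minus_minus)
    ultimately show "0 < blinfun_apply c u" using capp by simp
  qed
qed



lemma cone_add:
  assumes "convex C" "cone C" "a \<in> C" "b \<in> C" shows "a + b \<in> C"
proof -
  have "(1/2) *\<^sub>R a + (1/2) *\<^sub>R b \<in> C" by (rule convexD[OF assms(1,3,4)]) auto
  hence "2 *\<^sub>R ((1/2) *\<^sub>R a + (1/2) *\<^sub>R b) \<in> C" using assms(2) unfolding cone_def by simp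
  then show ?thesis by (simp add: scaleR_add_right)
qed

lemma cone_int_add:
  fixes C :: "'b::real_normed_vector set"
  assumes "convex C" "cone C" "a \<in> C" "d \<in> interior C" shows "a + d \<in> interior C"
proof -
  obtain r where r: "r > 0" "ball d r \<subseteq> C" using assms(4) mem_interior by blast
  have "ball (a + d) r \<subseteq> C"
  proof
    fix w assume "w \<in> ball (a + d) r"
    hence "w - a \<in> ball d r" by (simp add: dist_norm algebra_simps)
    hence "w - a \<in> C" using r by blast
    from cone_add[OF assms(1,2,3) this] show "w \<in> C" by simp
  qed
  then show ?thesis using r mem_interior by blast
qed

lemma cone_int_scale:
  fixes C :: "'b::real_normed_vector set"
  assumes "cone C" "d \<in> interior C" "s > 0" shows "s *\<^sub>R d \<in> interior C"
proof -
  obtain r where r: "r > 0" "ball d r \<subseteq> C" using assms(2) mem_interior by blast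
  have "ball (s *\<^sub>R d) (s * r) \<subseteq> C"
  proof
    fix w assume "w \<in> ball (s *\<^sub>R d) (s * r)"
    hence "norm (s *\<^sub>R d - w) < s * r" by (simp add: dist_norm)
    moreover have "s *\<^sub>R d - w = s *\<^sub>R (d - inverse s *\<^sub>R w)" using assms(3) by (simp add: algebra_simps)
    ultimately have "s * norm (d - inverse s *\<^sub>R w) < s * r" using assms(3) by simp
    hence "norm (d - inverse s *\<^sub>R w) < r" using assms(3) by simp
    hence "inverse s *\<^sub>R w \<in> C" using r by (auto simp: dist_norm)
    hence "s *\<^sub>R (inverse s *\<^sub>R w) \<in> C" using assms(1,3) unfolding cone_def by (meson less_imp_le)
    then show "w \<in> C" using assms(3) by simp
  qed
  then show ?thesis using r assms(3) mem_interior by (metis mult_pos_pos)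
qed

lemma sc_convex:
  assumes "strictly_convex g" "0 \<le> t" "t \<le> 1"
  shows "g (t *\<^sub>R x + (1 - t) *\<^sub>R y) \<le> t * g x + (1 - t) * g y"
proof (cases "x = y \<or> t = 0 \<or> t = 1")
  case True
  then show ?thesis
  proof (elim disjE)
    assume "x = y" then show ?thesis by (simp add: scaleR_left_distrib[symmetric] algebra_simps)
  qed auto
next
  case False
  then show ?thesis using assms unfolding strictly_convex_def by (smt (verit))
qed

theorem proposition3p3:
  fixes K :: "'a::banach set" and C :: "'b::banach set"
    and g :: "'a \<Rightarrow> real" and gd :: "'a \<Rightarrow> ('a \<Rightarrow>\<^sub>L real)"
    and T :: "'a \<Rightarrow> 'a set" and f :: "'a \<Rightarrow> 'a \<Rightarrow> 'b"
    and v x z :: 'a and \<beta> :: real and e :: 'b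
  assumes K: "K \<noteq> {}" "closed K" "convex K"
    and C: "closed C" "convex C" "cone C" "C \<inter> uminus ` C \<subseteq> {0}" "interior C \<noteq> {}"
    and gF: "class_F g gd" and "H1 g gd" and "H2 g gd" and "H3 gd" and "H4 g"
    and "B4 g gd K T"
    and "B1 f" and "B2 f" and "B3 C f"
    and v: "v \<in> K" and x: "x \<in> T v" and \<beta>: "\<beta> > 0" and e: "e \<in> interior C"
    and z: "z \<in> weak_argmin C
              (\<lambda>y. \<beta> *\<^sub>R f x y + g y *\<^sub>R e - blinfun_apply (gd x) y *\<^sub>R e) (T v)"
  shows "\<exists>c \<in> dual_cone C - {0}. \<forall>y \<in> T v.
           blinfun_apply (gd x - gd z) (y - z) * blinfun_apply c e
             \<le> \<beta> * (blinfun_apply c (f x y) - blinfun_apply c (f x z))"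
proof -
  define F where "F = (\<lambda>y. \<beta> *\<^sub>R f x y + g y *\<^sub>R e - blinfun_apply (gd x) y *\<^sub>R e)"
  define Q where "Q = T v"
  have zQ: "z \<in> Q" and zmin: "\<not> (\<exists>y\<in>Q. F z - F y \<in> interior C)"
    using z unfolding weak_argmin_def F_def Q_def by auto
  have "\<forall>x\<in>K. T x \<subseteq> K \<and> T x \<noteq> {} \<and> closed (T x) \<and> convex (T x)"
    using \<open>B4 g gd K T\<close> unfolding B4_def by (rule conjunct1)
  hence cQ: "convex Q" using v unfolding Q_def by blast
  have eC: "e \<in> C" using e interior_subset by blast
  have gsc: "strictly_convex g" and gder: "gateaux_deriv g gd" using gF unfolding class_F_def by auto
  have fconv: "t *\<^sub>R f x y1 + (1 - t) *\<^sub>R f x y2 - f x (t *\<^sub>R y1 + (1 - t) *\<^sub>R y2) \<in> C"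
    if "0 \<le> t" "t \<le> 1" for t y1 y2
    using \<open>B3 C f\<close> that unfolding B3_def C_convex_def by blast
  have Csc: "a *\<^sub>R k \<in> C" if "k \<in> C" "a \<ge> 0" for a k using C(3) that unfolding cone_def by blast
  have FC: "t *\<^sub>R F y1 + (1 - t) *\<^sub>R F y2 - F (t *\<^sub>R y1 + (1 - t) *\<^sub>R y2) \<in> C"
    if t: "0 \<le> t" "t \<le> 1" for t y1 y2
  proof -
    define yt where "yt = t *\<^sub>R y1 + (1 - t) *\<^sub>R y2"
    have lin: "blinfun_apply (gd x) yt = t * blinfun_apply (gd x) y1 + (1 - t) * blinfun_apply (gd x) y2"
      unfolding yt_def by (simp add: blinfun.bilinear_simps)
    have "t *\<^sub>R F y1 + (1 - t) *\<^sub>R F y2 - F yt =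
        \<beta> *\<^sub>R (t *\<^sub>R f x y1 + (1 - t) *\<^sub>R f x y2 - f x yt) + (t * g y1 + (1 - t) * g y2 - g yt) *\<^sub>R e"
      unfolding F_def lin by (simp add: algebra_simps)
    moreover have "\<beta> *\<^sub>R (t *\<^sub>R f x y1 + (1 - t) *\<^sub>R f x y2 - f x yt) \<in> C"
      using Csc fconv t \<beta> yt_def by simp
    moreover have "(t * g y1 + (1 - t) * g y2 - g yt) *\<^sub>R e \<in> C"
      using Csc[OF eC] sc_convex[OF gsc t] yt_def by simp
    ultimately show ?thesis using cone_add[OF C(2,3)] yt_def by simp
  qed
  define U where "U = {F y - F z + d | y d. y \<in> Q \<and> d \<in> interior C}"
  have Umem: "F y - F z + d \<in> U" if "y \<in> Q" "d \<in> interior C" for y d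
    unfolding U_def using that by blast
  have oU: "open U"
  proof -
    have "U = (\<Union>y\<in>Q. (\<lambda>d. (F y - F z) + d) ` interior C)" unfolding U_def by auto
    then show ?thesis by (auto intro!: open_UN open_translation)
  qed
  have cU: "convex U"
  proof (rule convexI)
    fix a b and u w :: real assume a: "a \<in> U" and b: "b \<in> U" and u: "0 \<le> u" "0 \<le> w" "u + w = 1"
    obtain y1 d1 where 1: "y1 \<in> Q" "d1 \<in> interior C" "a = F y1 - F z + d1" using a U_def by blast
    obtain y2 d2 where 2: "y2 \<in> Q" "d2 \<in> interior C" "b = F y2 - F z + d2" using b U_def by blast
    have w: "w = 1 - u" using u by simp
    define yt where "yt = u *\<^sub>R y1 + (1 - u) *\<^sub>R y2"
    have ytQ: "yt \<in> Q" unfolding yt_def by (rule convexD[OF cQ 1(1) 2(1)]) (use u in auto)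
    have k: "u *\<^sub>R F y1 + (1 - u) *\<^sub>R F y2 - F yt \<in> C" using FC u w yt_def by simp
    have dd: "u *\<^sub>R d1 + (1 - u) *\<^sub>R d2 \<in> interior C"
      by (rule convexD[OF convex_interior[OF C(2)] 1(2) 2(2)]) (use u in auto)
    have eq: "u *\<^sub>R a + w *\<^sub>R b = F yt - F z +
        ((u *\<^sub>R F y1 + (1 - u) *\<^sub>R F y2 - F yt) + (u *\<^sub>R d1 + (1 - u) *\<^sub>R d2))"
      unfolding 1(3) 2(3) w by (simp add: algebra_simps)
    have "(u *\<^sub>R F y1 + (1 - u) *\<^sub>R F y2 - F yt) + (u *\<^sub>R d1 + (1 - u) *\<^sub>R d2) \<in> interior C"
      by (rule cone_int_add[OF C(2,3) k dd])
    from Umem[OF ytQ this] show "u *\<^sub>R a + w *\<^sub>R b \<in> U" unfolding eq .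
  qed
  have eU: "e \<in> U" using Umem[OF zQ e] by simp
  have U0: "0 \<notin> U"
  proof
    assume "0 \<in> U"
    then obtain y d where "y \<in> Q" "d \<in> interior C" "0 = F y - F z + d" using U_def by blast
    moreover have "F z - F y = d" using calculation(3) by (simp add: algebra_simps eq_neg_iff_add_eq_0)
    ultimately show False using zmin by blast
  qed
  obtain c :: "'b \<Rightarrow>\<^sub>L real" where c: "\<And>u. u \<in> U \<Longrightarrow> 0 < blinfun_apply c u"
    using separation[OF oU cU _ U0] eU by blast
  have ce: "0 < blinfun_apply c e" using c eU by blast
  have cdual: "c \<in> dual_cone C" unfolding dual_cone_def
  proof (intro CollectI ballI)
    fix k assume k: "k \<in> C"
    show "0 \<le> blinfun_apply c k"
    proof (rule ccontr)
      assume "\<not> ?thesis"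
      hence ck: "blinfun_apply c k < 0" by simp
      define s where "s = 2 * blinfun_apply c e / (- blinfun_apply c k)"
      have s: "s > 0" unfolding s_def using ck ce by (intro divide_pos_pos) auto
      have "s *\<^sub>R k + e \<in> interior C" using cone_int_add[OF C(2,3) Csc[OF k] e] s by simp
      hence "F z - F z + (s *\<^sub>R k + e) \<in> U" using Umem[OF zQ] by blast
      hence "0 < blinfun_apply c (s *\<^sub>R k + e)" using c by simp
      moreover have "blinfun_apply c (s *\<^sub>R k + e) = - blinfun_apply c e"
        using ck unfolding s_def by (simp add: blinfun.bilinear_simps field_simps)
      ultimately show False using ce by simp
    qed
  qed
  have c0: "c \<noteq> 0" using ce by auto
  have phi: "blinfun_apply c (F z) \<le> blinfun_apply c (F y)" if y: "y \<in> Q" for y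
  proof (rule ccontr)
    assume nt: "\<not> blinfun_apply c (F z) \<le> blinfun_apply c (F y)"
    define m where "m = blinfun_apply c (F z) - blinfun_apply c (F y)"
    have m: "m > 0" using nt m_def by simp
    define d where "d = (m / (2 * blinfun_apply c e)) *\<^sub>R e"
    have "d \<in> interior C" unfolding d_def by (rule cone_int_scale[OF C(3) e]) (use m ce in simp)
    hence "F y - F z + d \<in> U" using Umem[OF y] by blast
    hence "0 < blinfun_apply c (F y - F z + d)" using c by blast
    moreover have "blinfun_apply c (F y - F z + d) = - m / 2"
      using ce unfolding d_def m_def by (simp add: blinfun.bilinear_simps field_simps)
    ultimately show False using m by simp
  qed
  have cF: "blinfun_apply c (F y) = \<beta> * blinfun_apply c (f x y) + (g y - blinfun_apply (gd x) y) * blinfun_apply c e" for y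
    unfolding F_def by (simp add: blinfun.bilinear_simps algebra_simps)
  show ?thesis
  proof (intro bexI[of _ c] ballI)
    show "c \<in> dual_cone C - {0}" using cdual c0 by simp
  next
    fix y assume yT: "y \<in> T v"
    hence y: "y \<in> Q" using Q_def by simp
    define h where "h = y - z"
    define ce' where "ce' = blinfun_apply c e"
    define A where "A = \<beta> * (blinfun_apply c (f x y) - blinfun_apply c (f x z))"
    define q where "q t = A + ce' * ((g (z + t *\<^sub>R h) - g z) / t - blinfun_apply (gd x) h)" for t
    have qpos: "0 \<le> q t" if t: "0 < t" "t < 1" for t
    proof -
      define yt where "yt = t *\<^sub>R y + (1 - t) *\<^sub>R z"
      have yt: "yt = z + t *\<^sub>R h" unfolding yt_def h_def by (simp add: algebra_simps)
      have ytQ: "yt \<in> Q" unfolding yt_def by (rule convexD[OF cQ y zQ]) (use t in auto)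
      have "t *\<^sub>R f x y + (1 - t) *\<^sub>R f x z - f x yt \<in> C" using fconv t yt_def by simp
      hence "0 \<le> blinfun_apply c (t *\<^sub>R f x y + (1 - t) *\<^sub>R f x z - f x yt)"
        using cdual unfolding dual_cone_def by blast
      hence fle: "blinfun_apply c (f x yt) \<le> t * blinfun_apply c (f x y) + (1 - t) * blinfun_apply c (f x z)"
        by (simp add: blinfun.bilinear_simps)
      have gdl: "blinfun_apply (gd x) yt = blinfun_apply (gd x) z + t * blinfun_apply (gd x) h"
        unfolding yt by (simp add: blinfun.bilinear_simps)
      have "blinfun_apply c (F z) \<le> blinfun_apply c (F yt)" using phi ytQ by blast
      hence "\<beta> * blinfun_apply c (f x z) + (g z - blinfun_apply (gd x) z) * ce'
          \<le> \<beta> * blinfun_apply c (f x yt) + (g yt - blinfun_apply (gd x) yt) * ce'"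
        unfolding cF ce'_def .
      moreover have "\<beta> * blinfun_apply c (f x yt) \<le> \<beta> * (t * blinfun_apply c (f x y) + (1 - t) * blinfun_apply c (f x z))"
        using fle \<beta> by (simp add: mult_left_mono)
      ultimately have "0 \<le> t * A + ce' * (g yt - g z - t * blinfun_apply (gd x) h)"
        unfolding A_def gdl by (simp add: algebra_simps)
      moreover have "t * q t = t * A + ce' * (g yt - g z - t * blinfun_apply (gd x) h)"
        unfolding q_def yt using t by (simp add: field_simps)
      ultimately have "0 \<le> t * q t" by simp
      then show ?thesis using t by (simp add: zero_le_mult_iff)
    qed
    have der: "((\<lambda>t. g (z + t *\<^sub>R h)) has_real_derivative blinfun_apply (gd z) h) (at 0 within {0<..})"
      using gder unfolding gateaux_deriv_def by (blast intro: has_field_derivative_at_within)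
    hence "((\<lambda>t. (g (z + t *\<^sub>R h) - g z) / t) \<longlongrightarrow> blinfun_apply (gd z) h) (at_right 0)"
      unfolding has_field_derivative_iff by simp
    hence lim: "(q \<longlongrightarrow> A + ce' * (blinfun_apply (gd z) h - blinfun_apply (gd x) h)) (at_right 0)"
      unfolding q_def by (intro tendsto_intros)
    have ev: "eventually (\<lambda>t. 0 \<le> q t) (at_right (0::real))"
      unfolding eventually_at_right_field using qpos by (intro exI[of _ 1]) auto
    have "0 \<le> A + ce' * (blinfun_apply (gd z) h - blinfun_apply (gd x) h)"
      by (rule tendsto_lowerbound[OF lim ev]) simp
    then show "blinfun_apply (gd x - gd z) (y - z) * blinfun_apply c e
             \<le> \<beta> * (blinfun_apply c (f x y) - blinfun_apply c (f x z))"
      unfolding A_def ce'_def h_def by (simp add: blinfun.bilinear_simps algebra_simps)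
  qed
qed

end
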